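(* Let $p$ be a prime and let $P$ be any box with inputs and outputs in $\mathbb{Z}_p$. For $j\in\mathbb{Z}_p$ define $$\mu_j=\frac1{p^2}\sum_{x,y=0}^{p-1}\ \sum_{k=0}^{p-1}P(a=k,\,b=k-xy+j\mid x,y).$$ Then $P\to\sum_{j=0}^{p-1}\mu_j\,PR_{p,j}$. Explicitly, the following protocol uses one copy of $P$. Alice and Bob draw independent uniform shared $\alpha,\beta,\gamma\in\mathbb{Z}_p$. They input $x+\alpha$ and $y+\beta$ into $P$ and obtain $a',b'$. Alice outputs $a=a'-\beta x-\alpha\beta+\gamma$ and Bob outputs $b=b'+\alpha y+\gamma$. The resulting box is exactly $\sum_{j}\mu_jPR_{p,j}$.
   Context: Let $p$ be a prime. All arithmetic on elements of $\mathbb{Z}_p$ is modulo $p$. A box is a conditional probability distribution $P(a,b\mid x,y)$ with $a,b,x,y\in\mathbb{Z}_p$. It is shared by Alice, who supplies $x$ and receives $a$, and Bob, who supplies $y$ and receives $b$. Different copies act independently. For $j\in\mathbb{Z}_p$, the box $PR_{p,j}$ is defined by $PR_{p,j}(a,b\mid x,y)=1/p$ if $a-b=xy-j$, and $0$ otherwise. A convex combination of boxes is the corresponding convex combination of conditional distributions. $P_1\to P_2$ means the following. For some $N\ge1$, Alice and Bob, using shared randomness, $N$ copies of $P_1$, and local processing but no communication, can exactly produce outputs distributed as $P_2(a,b\mid x,y)$ for every input pair $(x,y)$. *)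

theory Defs
  imports Complex_Main "HOL-Computational_Algebra.Primes" "HOL-Number_Theory.Cong"
begin

text \<open>A box on Z_p is a function  P a b x y  = P(a,b | x,y), where the elements
  of Z_p are represented by the naturals 0..p-1.\<close>

type_synonym box = "nat \<Rightarrow> nat \<Rightarrow> nat \<Rightarrow> nat \<Rightarrow> real"

definition is_box :: "nat \<Rightarrow> box \<Rightarrow> bool" where
  "is_box p P \<longleftrightarrow>
     (\<forall>a<p. \<forall>b<p. \<forall>x<p. \<forall>y<p. P a b x y \<ge> 0) \<and>
     (\<forall>x<p. \<forall>y<p. (\<Sum>a<p. \<Sum>b<p. P a b x y) = 1)"

definition PR :: "nat \<Rightarrow> nat \<Rightarrow> box" where
  "PR p j a b x y =
     (if [int a - int b = int x * int y - int j] (mod int p) then 1 / real p else 0)"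

definition mu :: "nat \<Rightarrow> box \<Rightarrow> nat \<Rightarrow> real" where
  "mu p P j = (1 / (real p)^2) *
     (\<Sum>x<p. \<Sum>y<p. \<Sum>k<p.
        P k (nat ((int k - int x * int y + int j) mod int p)) x y)"

definition tuples :: "nat \<Rightarrow> nat \<Rightarrow> nat list set" where
  "tuples p N = {l. length l = N \<and> set l \<subseteq> {..<p}}"

text \<open>Alice picks the inputs of the N copies as a function of the
  shared randomness r and her input x, and her output as a function of r, x and
  the N outputs she receives; likewise for Bob. (Local randomness can be
  absorbed into the shared randomness.)\<close>
definition simulates :: "nat \<Rightarrow> nat \<Rightarrow> box \<Rightarrow> box \<Rightarrow> bool" where
  "simulates p N P Q \<longleftrightarrow>
    (\<exists>(R :: nat set) (w :: nat \<Rightarrow> real)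
       (fA :: nat \<Rightarrow> nat \<Rightarrow> nat list) (gA :: nat \<Rightarrow> nat \<Rightarrow> nat list \<Rightarrow> nat)
       (fB :: nat \<Rightarrow> nat \<Rightarrow> nat list) (gB :: nat \<Rightarrow> nat \<Rightarrow> nat list \<Rightarrow> nat).
       finite R \<and> (\<forall>r\<in>R. w r \<ge> 0) \<and> sum w R = 1 \<and>
       (\<forall>r\<in>R. \<forall>x<p. fA r x \<in> tuples p N) \<and>
       (\<forall>r\<in>R. \<forall>y<p. fB r y \<in> tuples p N) \<and>
       (\<forall>x<p. \<forall>y<p. \<forall>a<p. \<forall>b<p.
          Q a b x y =
            (\<Sum>r\<in>R. w r *
               (\<Sum>as\<in>tuples p N. \<Sum>bs\<in>tuples p N.
                  (\<Prod>i<N. P (as ! i) (bs ! i) (fA r x ! i) (fB r y ! i)) *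
                  (if gA r x as = a \<and> gB r y bs = b then 1 else 0)))))"

definition transforms :: "nat \<Rightarrow> box \<Rightarrow> box \<Rightarrow> bool" where
  "transforms p P Q \<longleftrightarrow> (\<exists>N\<ge>1. simulates p N P Q)"

end

theory Submission
  imports Defs
begin

lemma dvd_swap_aux:
  fixes g::int
  assumes h: "g = bb - b' - al*y + p*t" "X = x+al - p*s1" "Y = y + be - p*s2" "J = x*y - aa + bb - p*s3"
  shows "(p dvd (a' - be*x - al*be + g - aa)) = (p dvd (b' - (a' - X*Y + J)))"
proof -
  have "b' - (a' - X*Y + J) = - (a' - be*x - al*be + g - aa) + p*(t - s1*(y+be) - s2*(x+al) + p*s1*s2 + s3)"
    unfolding h by (simp add: algebra_simps)
  then show ?thesis by (metis dvd_add_left_iff dvd_minus_iff dvd_triv_left)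
qed

lemma key_mod:
  fixes p :: int
  assumes p: "p > 0" and aa: "0 \<le> aa" "aa < p" and bb: "0 \<le> bb" "bb < p"
  shows "((a' - be*x - al*be + g) mod p = aa \<and> (b' + al*y + g) mod p = bb) \<longleftrightarrow>
    (g mod p = (bb - b' - al*y) mod p \<and>
     b' mod p = (a' - ((x+al) mod p)*((y+be) mod p) + (x*y - aa + bb) mod p) mod p)"
proof -
  have aam: "aa mod p = aa" and bbm: "bb mod p = bb" using aa bb by simp_all
  have e1: "(b' + al*y + g) mod p = bb \<longleftrightarrow> g mod p = (bb - b' - al*y) mod p"
  proof -
    have "(b' + al*y + g) mod p = bb \<longleftrightarrow> p dvd (b' + al*y + g) - bb"
      using mod_eq_dvd_iff[of "b' + al*y + g" p bb] bbm by simp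
    also have "\<dots> \<longleftrightarrow> p dvd g - (bb - b' - al*y)" by (simp add: algebra_simps)
    also have "\<dots> \<longleftrightarrow> g mod p = (bb - b' - al*y) mod p" by (simp add: mod_eq_dvd_iff)
    finally show ?thesis .
  qed
  have e2: "(a' - be*x - al*be + g) mod p = aa \<longleftrightarrow>
     b' mod p = (a' - ((x+al) mod p)*((y+be) mod p) + (x*y - aa + bb) mod p) mod p"
    if gm: "g mod p = (bb - b' - al*y) mod p"
  proof -
    from gm have "p dvd g - (bb - b' - al*y)" by (simp add: mod_eq_dvd_iff)
    then obtain t where "g - (bb - b' - al*y) = p * t" by (auto elim: dvdE)
    hence ht: "g = bb - b' - al*y + p*t" by simp
    have h1: "(x+al) mod p = x + al - p * ((x+al) div p)" by (simp add: minus_div_mult_eq_mod[symmetric] algebra_simps)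
    have h2: "(y+be) mod p = y + be - p * ((y+be) div p)" by (simp add: minus_div_mult_eq_mod[symmetric] algebra_simps)
    have h3: "(x*y - aa + bb) mod p = x*y - aa + bb - p * ((x*y - aa + bb) div p)" by (simp add: minus_div_mult_eq_mod[symmetric] algebra_simps)
    have "(a' - be*x - al*be + g) mod p = aa \<longleftrightarrow> p dvd (a' - be*x - al*be + g - aa)"
      using mod_eq_dvd_iff[of "a' - be*x - al*be + g" p aa] aam by simp
    also have "\<dots> \<longleftrightarrow> p dvd (b' - (a' - ((x+al) mod p)*((y+be) mod p) + (x*y - aa + bb) mod p))"
      by (rule dvd_swap_aux[OF ht h1 h2 h3])
    also have "\<dots> \<longleftrightarrow> b' mod p = (a' - ((x+al) mod p)*((y+be) mod p) + (x*y - aa + bb) mod p) mod p"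
      by (simp add: mod_eq_dvd_iff)
    finally show ?thesis .
  qed
  show ?thesis using e1 e2 by blast
qed

lemma sum_delta_mod:
  assumes p: "p > (0::nat)"
  shows "(\<Sum>g<p. if int g mod int p = c mod int p then f g else 0) = f (nat (c mod int p))"
proof -
  have lt: "nat (c mod int p) < p" using p by (simp add: nat_less_iff)
  have "\<And>g. g < p \<Longrightarrow> (int g mod int p = c mod int p) = (g = nat (c mod int p))"
    using p by (auto simp: zmod_int[symmetric])
  hence "(\<Sum>g<p. if int g mod int p = c mod int p then f g else 0) = (\<Sum>g<p. if g = nat (c mod int p) then f g else 0)"
    by (intro sum.cong) auto
  also have "\<dots> = f (nat (c mod int p))" using lt by (simp add: sum.delta)
  finally show ?thesis .
qed

lemma sum_shift_mod:
  assumes p: "p > (0::nat)"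
  shows "(\<Sum>a<p. f ((x + a) mod p)) = (\<Sum>z<p. (f z :: real))"
proof -
  have inj: "inj_on (\<lambda>a. (x + a) mod p) {..<p}"
  proof
    fix a a' assume "a \<in> {..<p}" "a' \<in> {..<p}" "(x + a) mod p = (x + a') mod p"
    hence "[a = a'] (mod p)" "a < p" "a' < p" using cong_add_lcancel_nat[of x a a' p] by (auto simp: cong_def)
    thus "a = a'" by (simp add: cong_def)
  qed
  have im: "(\<lambda>a. (x + a) mod p) ` {..<p} = {..<p}"
    by (rule endo_inj_surj) (use inj p in auto)
  have "(\<Sum>z<p. f z) = (\<Sum>z\<in>(\<lambda>a. (x + a) mod p) ` {..<p}. f z)" using im by simp
  also have "\<dots> = (\<Sum>a<p. f ((x + a) mod p))" by (rule sum.reindex[OF inj, unfolded comp_def])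
  finally show ?thesis by simp
qed

lemma tuples1_sum:
  "(\<Sum>as\<in>tuples p 1. f as) = (\<Sum>a<p. f [a])"
proof -
  have "tuples p 1 = (\<lambda>a. [a]) ` {..<p}"
  proof
    show "tuples p 1 \<subseteq> (\<lambda>a. [a]) ` {..<p}"
    proof
      fix l assume "l \<in> tuples p 1"
      hence "length l = 1" "set l \<subseteq> {..<p}" by (auto simp: tuples_def)
      then obtain a where "l = [a]" by (auto simp: length_Suc_conv)
      thus "l \<in> (\<lambda>a. [a]) ` {..<p}" using \<open>set l \<subseteq> _\<close> by auto
    qed
    show "(\<lambda>a. [a]) ` {..<p} \<subseteq> tuples p 1" by (auto simp: tuples_def)
  qed
  moreover have "inj_on (\<lambda>a. [a]) {..<p}" by (auto simp: inj_on_def)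
  ultimately show ?thesis by (simp add: sum.reindex)
qed

lemma nat_mod_eq_iff: "p > (0::nat) \<Longrightarrow> (nat (u mod int p) = a) = (u mod int p = int a)"
  by auto

lemma pointwise:
  fixes P :: box and p a b x y al be :: nat
  assumes p: "p > 0" and a: "a < p" and b: "b < p"
  defines "X \<equiv> (x + al) mod p" and "Y \<equiv> (y + be) mod p"
    and "j0 \<equiv> nat ((int x * int y - int a + int b) mod int p)"
  shows "(\<Sum>g<p. \<Sum>a'<p. \<Sum>b'<p. P a' b' X Y *
     (if nat ((int a' - int be * int x - int al * int be + int g) mod int p) = a
       \<and> nat ((int b' + int al * int y + int g) mod int p) = b then 1 else 0))
   = (\<Sum>k<p. P k (nat ((int k - int X * int Y + int j0) mod int p)) X Y)"
proof -
  have ind: "(if nat ((int a' - int be * int x - int al * int be + int g) mod int p) = a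
       \<and> nat ((int b' + int al * int y + int g) mod int p) = b then 1 else (0::real))
     = (if int g mod int p = (int b - int b' - int al * int y) mod int p then
          (if int b' mod int p = (int a' - int X * int Y + int j0) mod int p then 1 else 0) else 0)"
    for a' b' g
  proof -
    have "(nat ((int a' - int be * int x - int al * int be + int g) mod int p) = a
       \<and> nat ((int b' + int al * int y + int g) mod int p) = b) \<longleftrightarrow>
      ((int a' - int be * int x - int al * int be + int g) mod int p = int a
       \<and> (int b' + int al * int y + int g) mod int p = int b)"
      using p by (simp add: nat_mod_eq_iff)
    also have "\<dots> \<longleftrightarrow> (int g mod int p = (int b - int b' - int al * int y) mod int p \<and>
       int b' mod int p = (int a' - ((int x + int al) mod int p)*((int y + int be) mod int p)
          + (int x * int y - int a + int b) mod int p) mod int p)"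
      by (rule key_mod) (use p a b in auto)
    also have "\<dots> \<longleftrightarrow> (int g mod int p = (int b - int b' - int al * int y) mod int p \<and>
       int b' mod int p = (int a' - int X * int Y + int j0) mod int p)"
      unfolding X_def Y_def j0_def using p by (simp add: of_nat_mod)
    finally show ?thesis by simp
  qed
  have "(\<Sum>g<p. \<Sum>a'<p. \<Sum>b'<p. P a' b' X Y *
     (if nat ((int a' - int be * int x - int al * int be + int g) mod int p) = a
       \<and> nat ((int b' + int al * int y + int g) mod int p) = b then 1 else 0))
    = (\<Sum>a'<p. \<Sum>b'<p. \<Sum>g<p. P a' b' X Y *
     (if nat ((int a' - int be * int x - int al * int be + int g) mod int p) = a
       \<and> nat ((int b' + int al * int y + int g) mod int p) = b then 1 else 0))"
    apply (rule trans[OF sum.swap])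
    apply (rule sum.cong[OF refl])
    apply (rule sum.swap)
    done
  also have "\<dots> = (\<Sum>a'<p. \<Sum>b'<p. P a' b' X Y *
      (if int b' mod int p = (int a' - int X * int Y + int j0) mod int p then 1 else 0))"
  proof (intro sum.cong refl)
    fix a' b'
    have "(\<Sum>g<p. P a' b' X Y *
     (if nat ((int a' - int be * int x - int al * int be + int g) mod int p) = a
       \<and> nat ((int b' + int al * int y + int g) mod int p) = b then 1 else 0))
      = P a' b' X Y * (\<Sum>g<p. if int g mod int p = (int b - int b' - int al * int y) mod int p then
          (if int b' mod int p = (int a' - int X * int Y + int j0) mod int p then 1 else 0) else 0)"
      unfolding ind sum_distrib_left ..
    also have "\<dots> = P a' b' X Y *
      (if int b' mod int p = (int a' - int X * int Y + int j0) mod int p then 1 else 0)"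
      by (subst sum_delta_mod[OF p]) simp
    finally show "(\<Sum>g<p. P a' b' X Y *
     (if nat ((int a' - int be * int x - int al * int be + int g) mod int p) = a
       \<and> nat ((int b' + int al * int y + int g) mod int p) = b then 1 else 0))
      = P a' b' X Y * (if int b' mod int p = (int a' - int X * int Y + int j0) mod int p then 1 else 0)" .
  qed
  also have "\<dots> = (\<Sum>k<p. P k (nat ((int k - int X * int Y + int j0) mod int p)) X Y)"
  proof (intro sum.cong refl)
    fix k
    have "(\<Sum>b'<p. P k b' X Y *
      (if int b' mod int p = (int k - int X * int Y + int j0) mod int p then 1 else 0))
      = (\<Sum>b'<p. if int b' mod int p = (int k - int X * int Y + int j0) mod int p then P k b' X Y else 0)"
      by (intro sum.cong refl) simp
    also have "\<dots> = P k (nat ((int k - int X * int Y + int j0) mod int p)) X Y"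
      by (rule sum_delta_mod[OF p])
    finally show "(\<Sum>b'<p. P k b' X Y *
      (if int b' mod int p = (int k - int X * int Y + int j0) mod int p then 1 else 0))
      = P k (nat ((int k - int X * int Y + int j0) mod int p)) X Y" .
  qed
  finally show ?thesis .
qed


lemma tuples1_sum': "(\<Sum>as\<in>tuples p (Suc 0). f as) = (\<Sum>a<p. f [a])"
  using tuples1_sum[of f p] by simp

definition enc :: "nat \<Rightarrow> nat \<times> nat \<times> nat \<Rightarrow> nat" where
  "enc p t = (case t of (a, b, c) \<Rightarrow> a + p * b + p * p * c)"

lemma enc_dec:
  assumes "a < p" "b < p" "c < (p::nat)"
  shows "enc p (a,b,c) mod p = a" "enc p (a,b,c) div p mod p = b" "enc p (a,b,c) div p div p = c"
proof -
  have p: "p > 0" using assms by simp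
  have e: "enc p (a,b,c) = a + p * (b + p * c)" unfolding enc_def by (simp add: algebra_simps)
  have d: "enc p (a,b,c) div p = b + p * c"
    unfolding e using assms p by simp
  show "enc p (a,b,c) mod p = a" unfolding e using assms by simp
  show "enc p (a,b,c) div p mod p = b" using d assms by simp
  show "enc p (a,b,c) div p div p = c" using d assms p by simp
qed

lemma enc_inj: "inj_on (enc p) ({..<p} \<times> {..<p} \<times> {..<p})"
proof
  fix s t assume s: "s \<in> {..<p} \<times> {..<p} \<times> {..<p}" and t: "t \<in> {..<p} \<times> {..<p} \<times> {..<p}"
    and e: "enc p s = enc p t"
  obtain a b c where sa: "s = (a,b,c)" by (cases s) auto
  obtain a' b' c' where ta: "t = (a',b',c')" by (cases t) auto
  show "s = t" using enc_dec[of a p b c] enc_dec[of a' p b' c'] s t e unfolding sa ta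
    by (metis SigmaE lessThan_iff prod.inject)
qed

lemma sum_enc:
  "(\<Sum>r\<in>enc p ` ({..<p} \<times> {..<p} \<times> {..<p}). f r) = (\<Sum>a<p. \<Sum>b<p. \<Sum>c<p. f (enc p (a,b,c)))"
proof -
  have "(\<Sum>r\<in>enc p ` ({..<p} \<times> {..<p} \<times> {..<p}). f r) = (\<Sum>t\<in>{..<p} \<times> {..<p} \<times> {..<p}. f (enc p t))"
    by (simp add: sum.reindex[OF enc_inj])
  also have "\<dots> = (\<Sum>a<p. \<Sum>t\<in>{..<p} \<times> {..<p}. f (enc p (a, t)))"
    by (simp add: sum.cartesian_product)
  also have "\<dots> = (\<Sum>a<p. \<Sum>b<p. \<Sum>c<p. f (enc p (a,b,c)))"
    by (simp add: sum.cartesian_product)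
  finally show ?thesis .
qed

theorem lemma2:
  fixes p :: nat and P :: box
  assumes "prime p" and "is_box p P"
  shows "transforms p P (\<lambda>a b x y. \<Sum>j<p. mu p P j * PR p j a b x y)"
proof -
  have p: "p > 0" using assms(1) prime_gt_0_nat by blast
  define R where "R = enc p ` ({..<p} \<times> {..<p} \<times> {..<p})"
  define w :: "nat \<Rightarrow> real" where "w = (\<lambda>_. 1 / real p ^ 3)"
  define dA where "dA = (\<lambda>r. r mod p)"
  define dB where "dB = (\<lambda>r. r div p mod p)"
  define dC where "dC = (\<lambda>r. r div p div p)"
  define fA where "fA = (\<lambda>r x. [(x + dA r) mod p])"
  define fB where "fB = (\<lambda>r y. [(y + dB r) mod p])"
  define gA where "gA = (\<lambda>r (x::nat) (as::nat list). nat ((int (as!0) - int (dB r) * int x - int (dA r) * int (dB r) + int (dC r)) mod int p))"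
  define gB where "gB = (\<lambda>r (y::nat) (bs::nat list). nat ((int (bs!0) + int (dA r) * int y + int (dC r)) mod int p))"
  have finR: "finite R" unfolding R_def by simp
  have sumw: "sum w R = 1"
    unfolding R_def using p by (simp add: w_def card_image[OF enc_inj] card_cartesian_product power3_eq_cube)
  have fAt: "\<forall>r\<in>R. \<forall>x<p. fA r x \<in> tuples p 1" using p by (simp add: fA_def tuples_def)
  have fBt: "\<forall>r\<in>R. \<forall>y<p. fB r y \<in> tuples p 1" using p by (simp add: fB_def tuples_def)
  have main: "(\<Sum>j<p. mu p P j * PR p j a b x y) =
            (\<Sum>r\<in>R. w r *
               (\<Sum>as\<in>tuples p 1. \<Sum>bs\<in>tuples p 1.
                  (\<Prod>i<1. P (as ! i) (bs ! i) (fA r x ! i) (fB r y ! i)) *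
                  (if gA r x as = a \<and> gB r y bs = b then 1 else 0)))"
    if xy: "x < p" "y < p" "a < p" "b < p" for x y a b
  proof -
    define j0 where "j0 = nat ((int x * int y - int a + int b) mod int p)"
    define G where "G = (\<lambda>X Y. \<Sum>k<p. P k (nat ((int k - int X * int Y + int j0) mod int p)) X Y)"
    have PRe: "PR p j a b x y = (if int j mod int p = (int x * int y - int a + int b) mod int p then 1 / real p else 0)" for j
    proof -
      have "[int a - int b = int x * int y - int j] (mod int p) \<longleftrightarrow> int p dvd (int a - int b) - (int x * int y - int j)"
        by (simp add: cong_def mod_eq_dvd_iff)
      also have "\<dots> \<longleftrightarrow> int p dvd int j - (int x * int y - int a + int b)"
        by (simp add: algebra_simps)
      also have "\<dots> \<longleftrightarrow> int j mod int p = (int x * int y - int a + int b) mod int p"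
        by (simp add: mod_eq_dvd_iff)
      finally show ?thesis unfolding PR_def by simp
    qed
    have L: "(\<Sum>j<p. mu p P j * PR p j a b x y) = mu p P j0 / real p"
    proof -
      have "(\<Sum>j<p. mu p P j * PR p j a b x y) = (\<Sum>j<p. if int j mod int p = (int x * int y - int a + int b) mod int p then mu p P j / real p else 0)"
        by (intro sum.cong refl) (simp add: PRe)
      also have "\<dots> = mu p P j0 / real p" unfolding j0_def by (rule sum_delta_mod[OF p])
      finally show ?thesis .
    qed
    have mu0: "mu p P j0 = (1 / (real p)^2) * (\<Sum>X<p. \<Sum>Y<p. G X Y)"
      unfolding mu_def G_def ..
    have "(\<Sum>r\<in>R. w r *
               (\<Sum>as\<in>tuples p 1. \<Sum>bs\<in>tuples p 1.
                  (\<Prod>i<1. P (as ! i) (bs ! i) (fA r x ! i) (fB r y ! i)) *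
                  (if gA r x as = a \<and> gB r y bs = b then 1 else 0)))
       = (\<Sum>r\<in>R. w r *
               (\<Sum>a'<p. \<Sum>b'<p.
                  P a' b' ((x + dA r) mod p) ((y + dB r) mod p) *
                  (if nat ((int a' - int (dB r) * int x - int (dA r) * int (dB r) + int (dC r)) mod int p) = a
                    \<and> nat ((int b' + int (dA r) * int y + int (dC r)) mod int p) = b then 1 else 0)))"
      by (simp add: tuples1_sum tuples1_sum' fA_def fB_def gA_def gB_def)
    also have "\<dots> = (1 / real p ^ 3) * (\<Sum>al<p. \<Sum>be<p. \<Sum>g<p. \<Sum>a'<p. \<Sum>b'<p.
                  P a' b' ((x + al) mod p) ((y + be) mod p) *
                  (if nat ((int a' - int be * int x - int al * int be + int g) mod int p) = a
                    \<and> nat ((int b' + int al * int y + int g) mod int p) = b then 1 else 0))"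
      unfolding R_def sum_enc w_def sum_distrib_left
      by (intro sum.cong refl) (simp add: dA_def dB_def dC_def enc_dec)
    also have "\<dots> = (1 / real p ^ 3) * (\<Sum>al<p. \<Sum>be<p. G ((x + al) mod p) ((y + be) mod p))"
      unfolding G_def j0_def
      by (intro arg_cong[where f="\<lambda>t. _ * t"] sum.cong refl pointwise[OF p xy(3,4)])
    also have "\<dots> = (1 / real p ^ 3) * (\<Sum>X<p. \<Sum>Y<p. G X Y)"
      using sum_shift_mod[OF p, of "\<lambda>X. \<Sum>Y<p. G X Y" x]
        sum_shift_mod[OF p, of "\<lambda>Y. G _ Y" y]
      by simp
    also have "\<dots> = mu p P j0 / real p"
      unfolding mu0 using p by (simp add: field_simps power3_eq_cube power2_eq_square)
    finally show ?thesis using L by simp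
  qed
  show ?thesis
    unfolding transforms_def simulates_def
    apply (rule exI[of _ 1])
    apply (simp only: order_refl simp_thms)
    apply (rule exI[of _ R], rule exI[of _ w], rule exI[of _ fA], rule exI[of _ gA],
           rule exI[of _ fB], rule exI[of _ gB])
    using finR sumw fAt fBt main p by (simp add: w_def)
qed

end
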